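(* Let $k$ and $M$ be positive integers, and let $M=p_{1}^{e_{1}}p_{2}^{e_{2}}\cdots p_{l}^{e_{l}}$ be the prime factorization of $M$, where $p_1,\dots,p_l$ are distinct primes. For any integer $n\geq \max\{e_j\mid 1\le j\le l\}$, \[ \sum_{i=0}^{\varphi(M)-1}B^{(-k)}_{n+i}\equiv \sum_{i=0}^{\varphi(M)-1}B^{(-n-i)}_{k}\equiv 0\pmod{M}. \]
   Context: For any integer $k$, let $\mathrm{Li}_k(t)=\sum_{n=1}^{\infty} t^n/n^k$. The poly-Bernoulli numbers $B^{(k)}_n$ ($n\ge 0$) are defined by $\frac{\mathrm{Li}_k(1-e^{-t})}{1-e^{-t}}=\sum_{n=0}^{\infty}B^{(k)}_n\frac{t^n}{n!}$. For negative upper index these are integers. $\varphi$ denotes Euler's totient function. *)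

theory Defs
  imports "HOL-Computational_Algebra.Formal_Power_Series" "HOL-Number_Theory.Number_Theory"
begin

text \<open>The formal power series Li_k(x)/x = sum over m of x^m/(m+1)^k, for any integer k.\<close>
definition Li_over_x :: "int \<Rightarrow> real fps" where
  "Li_over_x k = Abs_fps (\<lambda>m. 1 / (real (m + 1)) powi k)"

text \<open>Poly-Bernoulli numbers: Li_k(1-e^{-t})/(1-e^{-t}) = sum of B_n^(k) t^n/n!.\<close>
definition polyB :: "int \<Rightarrow> nat \<Rightarrow> real" where
  "polyB k n = fact n * fps_nth (fps_compose (Li_over_x k) (1 - fps_exp (-1))) n"

end

theory Submission
  imports Defs
begin


lemma key_dvd:
  fixes M n a :: nat
  assumes "M > 0" and mult: "\<And>p. p \<in> prime_factors M \<Longrightarrow> multiplicity p M \<le> n" and "a \<ge> 1"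
  shows "M dvd a ^ n * (a ^ totient M - 1)"
proof (cases "a ^ n * (a ^ totient M - 1) = 0")
  case True then show ?thesis by (metis dvd_0_right)
next
  case Y: False
  show ?thesis
proof (rule multiplicity_le_imp_dvd)
  show "M \<noteq> 0" using assms by simp
  fix p :: nat assume p: "prime p"
  define e where "e = multiplicity p M"
  have pe: "p ^ e dvd M" unfolding e_def by (rule multiplicity_dvd)
  have "p ^ e dvd a ^ n * (a ^ totient M - 1)"
  proof (cases "p dvd a")
    case True
    show ?thesis
    proof (cases "e = 0")
      case True then show ?thesis by simp
    next
      case False
      then have "p \<in> prime_factors M" using p \<open>M > 0\<close> by (auto simp: prime_factors_multiplicity e_def)
      then have "e \<le> n" using mult e_def by blast
      then have "p ^ e dvd a ^ n" using \<open>p dvd a\<close> by (rule dvd_power_le[rotated])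
      then show ?thesis by simp
    qed
  next
    case False
    then have cop: "coprime a (p ^ e)" using p
      by (simp add: coprime_power_right_iff prime_imp_coprime_nat coprime_commute[of a p])
    have c1: "[a ^ totient (p ^ e) = 1] (mod p ^ e)" using cop by (rule euler_theorem)
    obtain j where j: "totient M = totient (p ^ e) * j" using totient_dvd[OF pe] by (auto elim: dvdE)
    have "[(a ^ totient (p ^ e)) ^ j = 1 ^ j] (mod p ^ e)" using c1 by (rule cong_pow)
    then have "[a ^ totient M = 1] (mod p ^ e)" by (simp add: j power_mult)
    then have "p ^ e dvd a ^ totient M - 1" by (rule cong_to_1_nat)
    then show ?thesis by simp
  qed
  then show "multiplicity p M \<le> multiplicity p (a ^ n * (a ^ totient M - 1))"
    unfolding e_def using Y p by (intro multiplicity_geI) auto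
qed
qed



fun T :: "nat \<Rightarrow> nat \<Rightarrow> int" where
  "T 0 m = (if m = 0 then 1 else 0)"
| "T (Suc N) 0 = 0"
| "T (Suc N) (Suc m) = int (Suc m) * (T N m - T N (Suc m))"

lemma T_vanish: "m > N \<Longrightarrow> T N m = 0"
proof (induction N arbitrary: m)
  case 0 then show ?case by simp
next
  case (Suc N)
  then obtain m' where "m = Suc m'" by (cases m) auto
  with Suc show ?case by simp
qed

abbreviation XX :: "real fps" where "XX \<equiv> 1 - fps_exp (-1)"

lemma XX0: "fps_nth XX 0 = 0" by simp

lemma fps_const_m1: "fps_const (-1::real) = -1"
  by (metis fps_const_1_eq_1 fps_const_neg)

lemma deriv_XX: "fps_deriv XX = fps_exp (-1)"
  by (simp add: fps_const_m1)

lemma XX_pow_nth: "fact N * fps_nth (XX ^ m) N = real_of_int (T N m)"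
proof (induction N arbitrary: m)
  case 0 then show ?case by (simp add: fps_power_zeroth)
next
  case (Suc N)
  show ?case
  proof (cases m)
    case 0 then show ?thesis by simp
  next
    case (Suc m')
    have d: "fps_deriv (XX ^ Suc m') = fps_const (real (Suc m')) * (XX ^ m' - XX ^ Suc m')"
    proof -
      have "fps_deriv (XX ^ Suc m') = fps_const (real (Suc m')) * fps_deriv XX * XX ^ m'"
        by (simp only: fps_deriv_power) simp
      also have "\<dots> = fps_const (real (Suc m')) * (1 - XX) * XX ^ m'"
        by (simp only: deriv_XX) simp
      finally show ?thesis by (simp add: algebra_simps)
    qed
    have "fps_nth (fps_deriv (XX ^ Suc m')) N = real (Suc N) * fps_nth (XX ^ Suc m') (Suc N)"
      by (simp only: fps_deriv_nth) simp
    moreover have "fps_nth (fps_deriv (XX ^ Suc m')) N = real (Suc m') * (fps_nth (XX ^ m') N - fps_nth (XX ^ Suc m') N)"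
      by (simp only: d fps_mult_left_const_nth fps_sub_nth)
    ultimately have "real (Suc N) * fps_nth (XX ^ Suc m') (Suc N) = real (Suc m') * (fps_nth (XX ^ m') N - fps_nth (XX ^ Suc m') N)"
      by simp
    moreover have gen: "\<And>y u v::real. real (Suc N) * y = real (Suc m') * (u - v) \<Longrightarrow> fact (Suc N) * y = real (Suc m') * (fact N * u - fact N * v)"
    proof -
      fix y u v :: real
      assume h: "real (Suc N) * y = real (Suc m') * (u - v)"
      have "fact (Suc N) * y = fact N * (real (Suc N) * y)" by (simp add: algebra_simps)
      also have "\<dots> = real (Suc m') * (fact N * u - fact N * v)" by (simp only: h) (simp add: algebra_simps)
      finally show "fact (Suc N) * y = real (Suc m') * (fact N * u - fact N * v)" .
    qed
    ultimately have "fact (Suc N) * fps_nth (XX ^ Suc m') (Suc N) = real (Suc m') * (fact N * fps_nth (XX ^ m') N - fact N * fps_nth (XX ^ Suc m') N)"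
      by blast
    then show ?thesis using Suc.IH[of m'] Suc.IH[of "Suc m'"] Suc by simp
  qed
qed

lemma Li_nth: "fps_nth (Li_over_x (- int K)) m = real (m+1) ^ K"
  by (simp add: Li_over_x_def power_int_minus divide_inverse)

lemma formulaA: "polyB (- int K) N = real_of_int (\<Sum>m\<le>N. int (m+1) ^ K * T N m)"
proof -
  have "polyB (- int K) N = (\<Sum>i=0..N. real (i+1) ^ K * (fact N * fps_nth (XX ^ i) N))"
    by (simp add: polyB_def fps_compose_nth Li_nth sum_distrib_left algebra_simps)
  also have "\<dots> = (\<Sum>i\<le>N. real (i+1) ^ K * real_of_int (T N i))"
    by (simp add: XX_pow_nth atLeast0AtMost)
  finally show ?thesis by simp
qed

lemma exp0: "fps_exp (0::real) = 1"
  by (rule fps_ext) simp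

lemma expm1: "fps_exp (-1::real) * fps_exp 1 = 1"
  by (simp flip: fps_exp_add_mult add: exp0)

lemma Li_base: "Li_over_x 0 oo XX = fps_exp 1"
proof -
  have a: "Li_over_x 0 * (1 - fps_X) = 1"
  proof (rule fps_ext)
    fix n
    show "fps_nth (Li_over_x 0 * (1 - fps_X)) n = fps_nth 1 n"
      by (simp add: algebra_simps Li_over_x_def)
  qed
  have "(Li_over_x 0 oo XX) * ((1 - fps_X) oo XX) = 1 oo XX"
    by (simp only: a fps_compose_mult_distrib[OF XX0, symmetric])
  hence b: "(Li_over_x 0 oo XX) * fps_exp (-1) = 1"
    by (simp add: fps_compose_sub_distrib)
  have "Li_over_x 0 oo XX = (Li_over_x 0 oo XX) * (fps_exp (-1) * fps_exp 1)"
    by (simp add: expm1)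
  also have "\<dots> = fps_exp 1" by (simp only: mult.assoc[symmetric] b) simp
  finally show ?thesis .
qed

lemma Li_step: "Li_over_x (- int (Suc K)) oo XX = fps_exp 1 * fps_deriv (XX * (Li_over_x (- int K) oo XX))"
proof -
  have h1: "fps_deriv (fps_X * Li_over_x (- int K)) = Li_over_x (- int (Suc K))"
  proof (rule fps_ext)
    fix n
    show "fps_nth (fps_deriv (fps_X * Li_over_x (- int K))) n = fps_nth (Li_over_x (- int (Suc K))) n"
      by (simp only: fps_deriv_nth fps_X_mult_nth Li_nth) simp
  qed
  have h2: "XX * (Li_over_x (- int K) oo XX) = (fps_X * Li_over_x (- int K)) oo XX"
    by (simp add: fps_compose_mult_distrib[OF XX0])
  have h3: "fps_deriv ((fps_X * Li_over_x (- int K)) oo XX) = (Li_over_x (- int (Suc K)) oo XX) * fps_exp (-1)"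
    by (simp only: fps_compose_deriv[OF XX0] h1 deriv_XX)
  show ?thesis
    by (simp only: h2 h3 mult.commute[of "fps_exp 1"] mult.assoc expm1) simp
qed

lemma op_E: "fps_exp 1 * fps_deriv (XX * fps_exp (c + 1)) =
   fps_const (c + 1) * fps_exp (c + 2) - fps_const c * fps_exp (c + 1)"
proof -
  have e1: "XX * fps_exp (c + 1) = fps_exp (c+1) - fps_exp c"
    by (simp add: algebra_simps flip: fps_exp_add_mult)
  have e2: "fps_exp 1 * fps_deriv (fps_exp (c+1) - fps_exp c) =
     fps_const (c + 1) * (fps_exp 1 * fps_exp (c + 1)) - fps_const c * (fps_exp 1 * fps_exp c)"
    by (simp add: algebra_simps)
  have e3: "fps_exp 1 * fps_exp (c + 1) = fps_exp (c + 2)"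
  proof -
    have "c + 2 = 1 + (c + 1)" by simp
    then show ?thesis by (simp only: fps_exp_add_mult)
  qed
  have e4: "fps_exp 1 * fps_exp c = fps_exp (c + 1)"
    by (simp only: fps_exp_add_mult add.commute[of c 1])
  show ?thesis by (simp only: e1 e2 e3 e4)
qed

lemma cc: "fps_const (x::real) * (fps_const y * f) = fps_const (x * y) * f"
  by (simp add: mult.assoc[symmetric])

lemma cdist: "fps_const ((r::real) * (x - y)) * F = fps_const (x * r) * F - fps_const (y * r) * F"
proof -
  have "r * (x - y) = x * r - y * r" by (simp add: algebra_simps)
  then show ?thesis by (simp only: fps_const_sub[symmetric] left_diff_distrib)
qed

definition SS :: "nat \<Rightarrow> real fps" where
  "SS K = (\<Sum>m\<le>K. fps_const (real_of_int (T K m)) * fps_exp (real m + 1))"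

lemma SS_step: "SS (Suc K) = fps_exp 1 * fps_deriv (XX * SS K)"
proof -
  define a where "a m = fps_const (real_of_int (T K m) * real m) * fps_exp (real m + 1)" for m
  define b where "b m = fps_const (real_of_int (T K m) * (real m + 1)) * fps_exp (real m + 2)" for m
  have "fps_exp 1 * fps_deriv (XX * SS K) =
     (\<Sum>m\<le>K. fps_const (real_of_int (T K m)) * (fps_exp 1 * fps_deriv (XX * fps_exp (real m + 1))))"
    by (simp add: SS_def sum_distrib_left fps_deriv_sum algebra_simps)
  also have "\<dots> = (\<Sum>m\<le>K. b m - a m)"
    by (simp only: op_E right_diff_distrib cc a_def b_def)
  finally have r: "fps_exp 1 * fps_deriv (XX * SS K) = (\<Sum>m\<le>K. b m) - (\<Sum>m\<le>K. a m)"
    by (simp add: sum_subtractf)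
  have "SS (Suc K) = (\<Sum>m\<le>K. fps_const (real_of_int (T (Suc K) (Suc m))) * fps_exp (real (Suc m) + 1))"
    by (simp only: SS_def sum.atMost_Suc_shift) simp
  also have "\<dots> = (\<Sum>m\<le>K. b m - a (Suc m))"
  proof (rule sum.cong)
    fix m assume "m \<in> {..K}"
    have q1: "real (Suc m) + 1 = real m + 2" by simp
    have q2: "real (Suc m) = real m + 1" by simp
    show "fps_const (real_of_int (T (Suc K) (Suc m))) * fps_exp (real (Suc m) + 1) = b m - a (Suc m)"
      by (simp only: a_def b_def T.simps of_int_mult of_int_of_nat_eq q1) (simp only: q2 of_int_diff cdist)
  qed simp
  also have "\<dots> = (\<Sum>m\<le>K. b m) - (\<Sum>m\<le>K. a (Suc m))"
    by (simp add: sum_subtractf)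
  also have "(\<Sum>m\<le>K. a (Suc m)) = (\<Sum>m\<le>K. a m)"
  proof -
    have "(\<Sum>m\<le>Suc K. a m) = a 0 + (\<Sum>m\<le>K. a (Suc m))" by (rule sum.atMost_Suc_shift)
    moreover have "(\<Sum>m\<le>Suc K. a m) = (\<Sum>m\<le>K. a m) + a (Suc K)" by simp
    moreover have "a 0 = 0" by (simp add: a_def)
    moreover have "a (Suc K) = 0" by (simp add: a_def T_vanish)
    ultimately show ?thesis by simp
  qed
  finally show ?thesis using r by simp
qed

lemma formulaB_fps: "Li_over_x (- int K) oo XX = SS K"
proof (induction K)
  case 0 then show ?case by (simp add: Li_base SS_def)
next
  case (Suc K) then show ?case by (simp only: Li_step SS_step)
qed

lemma formulaB: "polyB (- int K) N = real_of_int (\<Sum>m\<le>K. T K m * int (m+1) ^ N)"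
proof -
  have "polyB (- int K) N = fact N * fps_nth (SS K) N"
    by (simp add: polyB_def formulaB_fps)
  also have "\<dots> = (\<Sum>m\<le>K. real_of_int (T K m) * (real m + 1) ^ N)"
    by (simp add: SS_def fps_sum_nth sum_distrib_left)
  finally show ?thesis by (simp add: add.commute)
qed


lemma T_div: "k > 0 \<Longrightarrow> \<exists>U. T k m = int m * U"
proof -
  assume "k > 0"
  then obtain k' where k: "k = Suc k'" by (cases k) auto
  show ?thesis
  proof (cases m)
    case 0 then show ?thesis using k by simp
  next
    case (Suc m') then show ?thesis using k by auto
  qed
qed

lemma main_dvd:
  fixes k M n :: nat
  assumes "k > 0" and "M > 0"
    and mult: "\<And>p. p \<in> prime_factors M \<Longrightarrow> multiplicity p M \<le> n"
  shows "int M dvd (\<Sum>i<totient M. \<Sum>m\<le>k. T k m * int (m+1) ^ (n + i))"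
proof -
  have eq: "(\<Sum>i<totient M. \<Sum>m\<le>k. T k m * int (m+1) ^ (n + i)) =
    (\<Sum>m\<le>k. T k m * (int (m+1) ^ n * (\<Sum>i<totient M. int (m+1) ^ i)))"
    by (subst sum.swap) (simp add: sum_distrib_left power_add mult.assoc)
  have "int M dvd T k m * (int (m+1) ^ n * (\<Sum>i<totient M. int (m+1) ^ i))" for m
  proof -
    obtain U where U: "T k m = int m * U" using T_div[OF \<open>k > 0\<close>] by blast
    have g: "int (m+1) ^ totient M - 1 = int m * (\<Sum>i<totient M. int (m+1) ^ i)"
      by (simp add: power_diff_1_eq)
    have "M dvd (m+1) ^ n * ((m+1) ^ totient M - 1)"
      by (rule key_dvd[OF \<open>M > 0\<close> mult]) auto
    then have "int M dvd int ((m+1) ^ n * ((m+1) ^ totient M - 1))"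
      by (simp only: int_dvd_int_iff)
    also have "int ((m+1) ^ n * ((m+1) ^ totient M - 1)) = int (m+1) ^ n * (int (m+1) ^ totient M - 1)"
      by (simp add: of_nat_diff)
    finally have "int M dvd int (m+1) ^ n * (int (m+1) ^ totient M - 1)" .
    then have "int M dvd U * (int (m+1) ^ n * (int (m+1) ^ totient M - 1))"
      by (rule dvd_mult)
    also have "U * (int (m+1) ^ n * (int (m+1) ^ totient M - 1)) =
       T k m * (int (m+1) ^ n * (\<Sum>i<totient M. int (m+1) ^ i))"
      by (simp only: g U) (simp add: algebra_simps)
    finally show ?thesis .
  qed
  then show ?thesis unfolding eq by (intro dvd_sum)
qed

theorem corollary3p7:
  fixes k M n :: nat
  assumes "k > 0" and "M > 0"
    and "\<And>p. p \<in> prime_factors M \<Longrightarrow> multiplicity p M \<le> n"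
  shows "(\<exists>z::int. (\<Sum>i<totient M. polyB (- int k) (n + i)) = of_int (int M * z))
       \<and> (\<exists>z::int. (\<Sum>i<totient M. polyB (- int (n + i)) k) = of_int (int M * z))"
proof -
  obtain z where z: "(\<Sum>i<totient M. \<Sum>m\<le>k. T k m * int (m+1) ^ (n + i)) = int M * z"
    using main_dvd[OF assms] by (auto elim: dvdE)
  have s1: "(\<Sum>i<totient M. polyB (- int k) (n + i)) = of_int (\<Sum>i<totient M. \<Sum>m\<le>k. T k m * int (m+1) ^ (n + i))"
    by (simp only: formulaB of_int_sum)
  have s2: "(\<Sum>i<totient M. polyB (- int (n + i)) k) = of_int (\<Sum>i<totient M. \<Sum>m\<le>k. T k m * int (m+1) ^ (n + i))"
    by (simp only: formulaA of_int_sum mult.commute)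
  show ?thesis using s1 s2 z by metis
qed

end
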